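(* Let $d\ge 3$ be odd. If $w$ is a word over $A\cup A^{-1}$ that represents the identity element of $G_d$, then the exponent sum $|w|_{a_i}$ is $0$ for every $i\in\{1,\dots,d\}$.
   Context: Let $d\ge 3$, $X=\{1,\dots,d\}$, $T$ the $d$-regular rooted tree with vertex set $X^*$. $\mathrm{Aut}(T)$ is the group of root-preserving automorphisms with product left-to-right: $(gh)(u)=h(g(u))$. Sections $g|_u$ are defined by $g(uv)=g(u)\,g|_u(v)$; we write $g=(g|_1,\dots,g|_d)\lambda_g$ with $\lambda_g\in S_d$ the action on the first level; $e$ is the identity; $\overline{j}\in\{1,\dots,d\}$ denotes $j$ mod $d$. $G_d=\langle A\rangle\le\mathrm{Aut}(T)$, $A=\{a_1,\dots,a_d\}$, where $a_i$ acts on the first level as $(i\ \overline{i+1})$, with $a_i|_i=a_i$, $a_i|_{\overline{i+1}}=a_{\overline{i+1}}$, and $a_i|_x=e$ otherwise. For a word $w$ over $A\cup A^{-1}$ and $p\in A$, $|w|_p$ denotes the exponent sum of $p$ in $w$ (number of occurrences of $p$ minus number of occurrences of $p^{-1}$). *)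

theory Defs
  imports Main
begin

(* Vertices of the d-regular rooted tree: lists over X = {1..d}.
   Letters of words over A \<union> A^-1: pairs (i, b) with i \<in> {1..d};
   b = False means a_i, b = True means a_i^-1. *)

definition nxt :: "nat \<Rightarrow> nat \<Rightarrow> nat" where
  "nxt d i = (if i = d then 1 else i + 1)"

fun gen_act :: "nat \<Rightarrow> nat \<Rightarrow> nat list \<Rightarrow> nat list" where
  "gen_act d i [] = []"
| "gen_act d i (x # v) =
     (if x = i then nxt d i # gen_act d i v
      else if x = nxt d i then i # gen_act d (nxt d i) v
      else x # v)"

fun gen_inv_act :: "nat \<Rightarrow> nat \<Rightarrow> nat list \<Rightarrow> nat list" where
  "gen_inv_act d i [] = []"
| "gen_inv_act d i (y # w) =
     (if y = nxt d i then i # gen_inv_act d i w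
      else if y = i then nxt d i # gen_inv_act d (nxt d i) w
      else y # w)"

definition letter_act :: "nat \<Rightarrow> nat \<times> bool \<Rightarrow> nat list \<Rightarrow> nat list" where
  "letter_act d l = (if snd l then gen_inv_act d (fst l) else gen_act d (fst l))"

(* products are left-to-right: (gh)(u) = h(g(u)), so the first letter acts first *)
definition word_act :: "nat \<Rightarrow> (nat \<times> bool) list \<Rightarrow> nat list \<Rightarrow> nat list" where
  "word_act d w u = foldl (\<lambda>v l. letter_act d l v) u w"

definition is_word :: "nat \<Rightarrow> (nat \<times> bool) list \<Rightarrow> bool" where
  "is_word d w \<longleftrightarrow> (\<forall>l \<in> set w. fst l \<in> {1..d})"

definition represents_identity :: "nat \<Rightarrow> (nat \<times> bool) list \<Rightarrow> bool" where
  "represents_identity d w \<longleftrightarrow> (\<forall>u. set u \<subseteq> {1..d} \<longrightarrow> word_act d w u = u)"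

definition exp_sum :: "(nat \<times> bool) list \<Rightarrow> nat \<Rightarrow> int" where
  "exp_sum w i = int (length (filter (\<lambda>l. l = (i, False)) w))
               - int (length (filter (\<lambda>l. l = (i, True)) w))"

end

theory Submission
  imports Defs
begin


definition stp :: "nat \<Rightarrow> nat \<times> bool \<Rightarrow> nat \<Rightarrow> nat \<times> (nat \<times> bool) option" where
"stp d l x = (if \<not> snd l then
   (if x = fst l then (nxt d (fst l), Some (fst l, False))
    else if x = nxt d (fst l) then (fst l, Some (nxt d (fst l), False)) else (x, None))
 else
   (if x = nxt d (fst l) then (fst l, Some (fst l, True))
    else if x = fst l then (nxt d (fst l), Some (nxt d (fst l), True)) else (x, None)))"

fun endv :: "nat \<Rightarrow> (nat \<times> bool) list \<Rightarrow> nat \<Rightarrow> nat" where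
  "endv d [] x = x"
| "endv d (l # w) x = endv d w (fst (stp d l x))"

fun secw :: "nat \<Rightarrow> (nat \<times> bool) list \<Rightarrow> nat \<Rightarrow> (nat \<times> bool) list" where
  "secw d [] x = []"
| "secw d (l # w) x = (case snd (stp d l x) of None \<Rightarrow> [] | Some l' \<Rightarrow> [l']) @ secw d w (fst (stp d l x))"

lemma letter_cons:
  "letter_act d l (x # u) = fst (stp d l x) # (case snd (stp d l x) of None \<Rightarrow> u | Some l' \<Rightarrow> letter_act d l' u)"
  by (cases l) (auto simp: letter_act_def stp_def)

lemma letter_nil: "letter_act d l [] = []"
  by (cases l) (auto simp: letter_act_def)

lemma word_act_Cons: "word_act d (l # w) u = word_act d w (letter_act d l u)"
  by (simp add: word_act_def)

lemma word_act_append: "word_act d (p @ q) u = word_act d q (word_act d p u)"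
  by (simp add: word_act_def)

lemma word_act_nil: "word_act d w [] = []"
  by (induction w) (auto simp: word_act_Cons letter_nil word_act_def)

lemma wa_cons: "word_act d w (x # u) = endv d w x # word_act d (secw d w x) u"
proof (induction w arbitrary: x u)
  case Nil then show ?case by (simp add: word_act_def)
next
  case (Cons l w)
  show ?case
  proof (cases "snd (stp d l x)")
    case None
    then show ?thesis using Cons by (simp add: word_act_Cons letter_cons)
  next
    case (Some l')
    then show ?thesis using Cons
      by (simp add: word_act_Cons letter_cons word_act_append)
  qed
qed

lemma nxt_range: "i \<in> {1..d} \<Longrightarrow> nxt d i \<in> {1..d}"
  by (auto simp: nxt_def)

lemma nxt_neq: "d \<ge> 2 \<Longrightarrow> nxt d i \<noteq> i"
  by (auto simp: nxt_def)

lemma stp_range: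
  assumes "x \<in> {1..d}" "fst l \<in> {1..d}"
  shows "fst (stp d l x) \<in> {1..d}" "snd (stp d l x) = Some l' \<Longrightarrow> fst l' \<in> {1..d}"
  using assms nxt_range[of "fst l" d] by (auto simp: stp_def split: if_splits)

lemma closed:
  assumes "represents_identity d w" "x \<in> {1..d}"
  shows "endv d w x = x" "represents_identity d (secw d w x)"
proof -
  have "word_act d w [x] = [x]" using assms by (auto simp: represents_identity_def)
  then show "endv d w x = x" by (simp add: wa_cons word_act_nil)
  show "represents_identity d (secw d w x)"
    unfolding represents_identity_def
  proof (intro allI impI)
    fix u assume "set u \<subseteq> {1..d}"
    then have "word_act d w (x # u) = x # u" using assms by (auto simp: represents_identity_def)
    then show "word_act d (secw d w x) u = u" by (simp add: wa_cons)
  qed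
qed

lemma secw_is_word:
  "is_word d w \<Longrightarrow> x \<in> {1..d} \<Longrightarrow> is_word d (secw d w x)"
proof (induction w arbitrary: x)
  case Nil then show ?case by (simp add: is_word_def)
next
  case (Cons l w)
  have l: "fst l \<in> {1..d}" and w: "is_word d w" using Cons.prems by (auto simp: is_word_def)
  have r: "fst (stp d l x) \<in> {1..d}" using stp_range(1)[OF Cons.prems(2) l] .
  have "is_word d (secw d w (fst (stp d l x)))" using Cons.IH[OF w r] .
  moreover have "is_word d (case snd (stp d l x) of None \<Rightarrow> [] | Some l' \<Rightarrow> [l'])"
    using stp_range(2)[OF Cons.prems(2) l] by (cases "snd (stp d l x)") (auto simp: is_word_def)
  ultimately show ?case unfolding is_word_def by (cases "snd (stp d l x)") auto
qed

lemma secw_append: "secw d (p @ q) x = secw d p x @ secw d q (endv d p x)"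
  by (induction p arbitrary: x) auto

lemma endv_append: "endv d (p @ q) x = endv d q (endv d p x)"
  by (induction p arbitrary: x) auto

lemma secw_len: "length (secw d w x) \<le> length w"
  proof (induction w arbitrary: x)
  case (Cons l w)
  have "length (secw d w (fst (stp d l x))) \<le> length w" by (rule Cons.IH)
  then show ?case by (cases "snd (stp d l x)") auto
qed simp

lemma exp_sum_append: "exp_sum (p @ q) k = exp_sum p k + exp_sum q k"
  by (simp add: exp_sum_def)

lemma exp_sum_Cons: "exp_sum (l # q) k = exp_sum [l] k + exp_sum q k"
  using exp_sum_append[of "[l]" q k] by simp



definition prv :: "nat \<Rightarrow> nat \<Rightarrow> nat" where
  "prv d k = (if k = 1 then d else k - 1)"

lemma prv_iff: "d \<ge> 2 \<Longrightarrow> k \<in> {1..d} \<Longrightarrow> i \<in> {1..d} \<Longrightarrow> (prv d k = i) = (k = nxt d i)"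
  by (auto simp: prv_def nxt_def)

lemma stp_invol: "d \<ge> 2 \<Longrightarrow> fst (stp d l (fst (stp d l x))) = x"
  using nxt_neq[of d "fst l"] by (auto simp: stp_def)

lemma exp_single: "exp_sum [(i, b)] k = (if k = i then (if b then -1 else 1) else 0)"
  by (auto simp: exp_sum_def)

lemma sum_first:
  assumes d: "d \<ge> 2" and i: "i \<in> {1..d}" and k: "k \<in> {1..d}"
  shows "(\<Sum>x\<in>{1..d}. exp_sum (case snd (stp d (i,b) x) of None \<Rightarrow> [] | Some l' \<Rightarrow> [l']) k)
       = exp_sum [(i,b)] k + exp_sum [(i,b)] (prv d k)"
proof -
  let ?f = "\<lambda>x. exp_sum (case snd (stp d (i,b) x) of None \<Rightarrow> [] | Some l' \<Rightarrow> [l']) k"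
  have ne: "nxt d i \<noteq> i" using nxt_neq[OF d] .
  have sub: "{i, nxt d i} \<subseteq> {1..d}" using i nxt_range[OF i] by auto
  have "(\<Sum>x\<in>{1..d}. ?f x) = (\<Sum>x\<in>{i, nxt d i}. ?f x)"
    apply (rule sum.mono_neutral_cong_right)
    using sub by (auto simp: stp_def exp_sum_def)
  also have "\<dots> = ?f i + ?f (nxt d i)" using ne by simp
  also have "\<dots> = exp_sum [(i,b)] k + exp_sum [(i,b)] (prv d k)"
    using ne prv_iff[OF d k i] by (cases b) (auto simp: stp_def exp_single)
  finally show ?thesis .
qed

lemma sum_sec:
  assumes d: "d \<ge> 2" and w: "is_word d w" and k: "k \<in> {1..d}"
  shows "(\<Sum>x\<in>{1..d}. exp_sum (secw d w x) k) = exp_sum w k + exp_sum w (prv d k)"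
  using w
proof (induction w)
  case Nil then show ?case by (simp add: exp_sum_def)
next
  case (Cons l w)
  obtain i b where l: "l = (i,b)" by fastforce
  have i: "i \<in> {1..d}" and w: "is_word d w" using Cons.prems l by (auto simp: is_word_def)
  let ?g = "\<lambda>x. fst (stp d l x)"
  have "(\<Sum>x\<in>{1..d}. exp_sum (secw d w (?g x)) k) = (\<Sum>x\<in>{1..d}. exp_sum (secw d w x) k)"
    apply (rule sum.reindex_bij_witness[where i = ?g and j = ?g])
    using stp_invol[OF d] stp_range(1) i l by auto
  then show ?case using Cons.IH[OF w] sum_first[OF d i k, of b] l
    by (simp add: exp_sum_append sum.distrib exp_sum_Cons[of _ w])
qed

lemma M_inj:
  fixes v :: "nat \<Rightarrow> int"
  assumes "odd d" "d \<ge> 1" and h: "\<forall>k\<in>{1..d}. v k + v (prv d k) = 0"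
  shows "\<forall>k\<in>{1..d}. v k = 0"
proof -
  have p: "1 \<le> k \<Longrightarrow> k \<le> d \<Longrightarrow> v k = (-1)^(k-1) * v 1" for k
  proof (induction k)
    case 0 then show ?case by simp
  next
    case (Suc k)
    show ?case
    proof (cases "k = 0")
      case True then show ?thesis by simp
    next
      case False
      have "v (Suc k) + v k = 0" using h[rule_format, of "Suc k"] Suc.prems False by (auto simp: prv_def)
      then show ?thesis using Suc.IH Suc.prems False
        by (cases k) auto
    qed
  qed
  have "v 1 + v d = 0" using h[rule_format, of 1] assms(2) by (auto simp: prv_def)
  moreover have "v d = v 1" using p[of d] assms(1,2) by (simp add: neg_one_even_power)
  ultimately have "v 1 = 0" by simp
  then show ?thesis using p by auto
qed

lemma gi1: "d \<ge> 2 \<Longrightarrow> gen_inv_act d i (gen_act d i u) = u"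
  by (induction u arbitrary: i) (auto simp: nxt_neq nxt_neq[symmetric])

lemma gi2: "d \<ge> 2 \<Longrightarrow> gen_act d i (gen_inv_act d i u) = u"
  by (induction u arbitrary: i) (auto simp: nxt_neq nxt_neq[symmetric])

lemma inv_letter1: "d \<ge> 2 \<Longrightarrow> letter_act d (z, False) (letter_act d (z, True) u) = u"
  by (simp add: letter_act_def gi2)
lemma inv_letter2: "d \<ge> 2 \<Longrightarrow> letter_act d (z, True) (letter_act d (z, False) u) = u"
  by (simp add: letter_act_def gi1)

lemma gen_range: "set u \<subseteq> {1..d} \<Longrightarrow> i \<in> {1..d} \<Longrightarrow> set (gen_act d i u) \<subseteq> {1..d}"
  by (induction u arbitrary: i) (auto simp: nxt_def)
lemma gen_inv_range: "set u \<subseteq> {1..d} \<Longrightarrow> i \<in> {1..d} \<Longrightarrow> set (gen_inv_act d i u) \<subseteq> {1..d}"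
  by (induction u arbitrary: i) (auto simp: nxt_def)
lemma letter_range: "set u \<subseteq> {1..d} \<Longrightarrow> fst l \<in> {1..d} \<Longrightarrow> set (letter_act d l u) \<subseteq> {1..d}"
  using gen_range[of u d "fst l"] gen_inv_range[of u d "fst l"] by (auto simp: letter_act_def)

lemma R1:
  assumes d: "d \<ge> 2" and s: "s = p @ [(z,True),(z,False)] @ q" and id: "represents_identity d s"
    and w: "is_word d s"
  shows "represents_identity d (p @ q)" "is_word d (p @ q)" "exp_sum s k = exp_sum (p @ q) k"
    "length (p @ q) + 2 = length s"
proof -
  show "represents_identity d (p @ q)" using id unfolding represents_identity_def s
    by (simp add: word_act_append word_act_Cons inv_letter1[OF d] word_act_def[of d "[]"])
  show "is_word d (p @ q)" using w s by (auto simp: is_word_def)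
  show "exp_sum s k = exp_sum (p @ q) k" using s by (simp add: exp_sum_def)
  show "length (p @ q) + 2 = length s" using s by simp
qed

lemma R2:
  assumes d: "d \<ge> 2" and s: "s = (z,False) # m @ [(z,True)]" and id: "represents_identity d s"
    and w: "is_word d s"
  shows "represents_identity d m" "is_word d m" "exp_sum s k = exp_sum m k"
    "length m + 2 = length s"
proof -
  have z: "z \<in> {1..d}" using w s by (auto simp: is_word_def)
  show "represents_identity d m" unfolding represents_identity_def
  proof (intro allI impI)
    fix u' assume u': "set u' \<subseteq> {1..d}"
    let ?u = "letter_act d (z,True) u'"
    have "set ?u \<subseteq> {1..d}" using letter_range[OF u'] z by auto
    then have "word_act d s ?u = ?u" using id by (auto simp: represents_identity_def)
    then have "letter_act d (z,True) (word_act d m u') = letter_act d (z,True) u'"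
      using s by (simp add: word_act_append word_act_Cons inv_letter1[OF d] word_act_def[of d "[]"])
    then have "letter_act d (z,False) (letter_act d (z,True) (word_act d m u')) = letter_act d (z,False) (letter_act d (z,True) u')"
      by simp
    then show "word_act d m u' = u'" by (simp add: inv_letter1[OF d])
  qed
  show "is_word d m" using w s by (auto simp: is_word_def)
  show "exp_sum s k = exp_sum m k" using s by (simp add: exp_sum_append exp_sum_Cons[of _ "m @ _"] exp_single)
  show "length m + 2 = length s" using s by simp
qed



lemma act_iff: "snd (stp d l x) \<noteq> None \<longleftrightarrow> (x = fst l \<or> x = nxt d (fst l))"
  by (auto simp: stp_def)

lemma full_Cons:
  "length (secw d (l # w) x) = length (l # w) \<longleftrightarrow>
     snd (stp d l x) \<noteq> None \<and> length (secw d w (fst (stp d l x))) = length w"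
  using secw_len[of d w "fst (stp d l x)"] by (cases "snd (stp d l x)") auto

lemma full_append:
  assumes "length (secw d (p @ q) x) = length (p @ q)"
  shows "length (secw d p x) = length p" "length (secw d q (endv d p x)) = length q"
  using assms secw_len[of d p x] secw_len[of d q "endv d p x"] by (auto simp: secw_append)

lemma nxt2: "d \<ge> 3 \<Longrightarrow> i \<in> {1..d} \<Longrightarrow> j \<in> {1..d} \<Longrightarrow> i = nxt d j \<Longrightarrow> j = nxt d i \<Longrightarrow> False"
proof -
  assume d: "d \<ge> 3" and i: "i \<in> {1..d}" and j: "j \<in> {1..d}" and h1: "i = nxt d j" and h2: "j = nxt d i"
  show False
  proof (cases "j = d")
    case True
    then have "i = 1" using h1 by (simp add: nxt_def)
    then have "j = 2" using h2 d by (simp add: nxt_def)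
    then show False using True d by simp
  next
    case False
    then have "i = j + 1" using h1 by (simp add: nxt_def)
    then show False using h2 i j d by (simp add: nxt_def split: if_splits)
  qed
qed

lemma two_full:
  assumes d: "d \<ge> 3" and w: "is_word d w" and j: "j \<in> {1..d}"
    and xy: "(x = j \<and> y = nxt d j) \<or> (x = nxt d j \<and> y = j)"
    and fx: "length (secw d w x) = length w" and fy: "length (secw d w y) = length w"
  shows "\<forall>l\<in>set w. fst l = j"
  using w xy fx fy
proof (induction w arbitrary: x y)
  case Nil then show ?case by simp
next
  case (Cons l w)
  obtain i b where l: "l = (i,b)" by fastforce
  have i: "i \<in> {1..d}" and ww: "is_word d w" using Cons.prems(1) l by (auto simp: is_word_def)
  have ax: "x = i \<or> x = nxt d i" and ay: "y = i \<or> y = nxt d i"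
    using Cons.prems(3,4) l act_iff[of d l] full_Cons by auto
  have ne: "nxt d j \<noteq> j" using nxt_neq d by auto
  have nei: "nxt d i \<noteq> i" using nxt_neq d by auto
  have ij: "i = j"
    using ax ay Cons.prems(2) ne nei nxt2[OF d i j] by auto
  have fx': "length (secw d w (fst (stp d l x))) = length w"
    and fy': "length (secw d w (fst (stp d l y))) = length w" using Cons.prems(3,4) full_Cons by auto
  have xy': "(fst (stp d l x) = j \<and> fst (stp d l y) = nxt d j) \<or> (fst (stp d l x) = nxt d j \<and> fst (stp d l y) = j)"
    using Cons.prems(2) ij l ne by (auto simp: stp_def)
  show ?case using Cons.IH[OF ww xy' fx' fy'] ij l by auto
qed

lemma sec_unif: "\<forall>l\<in>set w. snd l = b \<Longrightarrow> \<forall>l\<in>set (secw d w x). snd l = b"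
proof (induction w arbitrary: x)
  case Nil then show ?case by simp
next
  case (Cons l w)
  have "\<forall>l\<in>set (secw d w (fst (stp d l x))). snd l = b" using Cons by auto
  moreover have "snd (stp d l x) = Some l' \<Longrightarrow> snd l' = b" for l'
    using Cons.prems by (auto simp: stp_def split: if_splits)
  ultimately show ?case by (cases "snd (stp d l x)") auto
qed

lemma nonzero:
  assumes "s \<noteq> []" "\<forall>l\<in>set s. snd l = b"
  shows "exp_sum s (fst (hd s)) \<noteq> 0"
proof -
  obtain k s' where s: "s = (k, b) # s'" using assms by (cases s) auto
  have all: "\<forall>l\<in>set s'. snd l = b" using assms s by auto
  show ?thesis
  proof (cases b)
    case True
    have "filter (\<lambda>l. l = (k, False)) s = []" using assms(2) True by (auto simp: filter_empty_conv)
    then show ?thesis using s True by (simp add: exp_sum_def)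
  next
    case False
    have "filter (\<lambda>l. l = (k, True)) s = []" using assms(2) False by (auto simp: filter_empty_conv)
    then show ?thesis using s False by (simp add: exp_sum_def)
  qed
qed

lemma must_full:
  assumes d: "d \<ge> 3"
    and IH: "\<forall>w'. length w' < length s \<longrightarrow> is_word d w' \<longrightarrow> represents_identity d w' \<longrightarrow> (\<forall>k. exp_sum w' k = 0)"
    and w: "is_word d s" and id: "represents_identity d s" and u: "\<forall>l\<in>set s. snd l = b"
    and x: "x \<in> {1..d}" and ne: "secw d s x \<noteq> []"
  shows "length (secw d s x) = length s"
proof (rule ccontr)
  assume "length (secw d s x) \<noteq> length s"
  then have "length (secw d s x) < length s" using secw_len[of d s x] by auto
  then have "\<forall>k. exp_sum (secw d s x) k = 0"
    using IH secw_is_word[OF w x] closed(2)[OF id x] by auto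
  then show False using nonzero[OF ne sec_unif[OF u]] by auto
qed

lemma unif:
  assumes d: "d \<ge> 3"
    and IH: "\<forall>w'. length w' < length s \<longrightarrow> is_word d w' \<longrightarrow> represents_identity d w' \<longrightarrow> (\<forall>k. exp_sum w' k = 0)"
    and w: "is_word d s" and id: "represents_identity d s" and u: "\<forall>l\<in>set s. snd l = b"
    and s: "s = (j,b) # s'"
  shows "\<forall>l\<in>set s. fst l = j"
proof -
  have j: "j \<in> {1..d}" using w s by (auto simp: is_word_def)
  have nj: "nxt d j \<in> {1..d}" using nxt_range[OF j] .
  have ne: "nxt d j \<noteq> j" using nxt_neq d by auto
  have "secw d s j \<noteq> []" using s ne by (cases b) (auto simp: stp_def)
  then have f1: "length (secw d s j) = length s" using must_full[OF d IH w id u j] by auto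
  have "secw d s (nxt d j) \<noteq> []" using s ne by (cases b) (auto simp: stp_def)
  then have f2: "length (secw d s (nxt d j)) = length s" using must_full[OF d IH w id u nj] by auto
  show ?thesis using two_full[OF d w j _ f1 f2] by auto
qed

lemma signs:
  assumes A: "\<not>(\<exists>k. Suc k < length w \<and> snd (w!k) \<and> \<not> snd (w!Suc k))"
    and B: "\<not>(length w \<ge> 2 \<and> \<not> snd (w!0) \<and> snd (w!(length w - 1)))" and ne: "w \<noteq> []"
  shows "\<forall>l\<in>set w. snd l = snd (w!0)"
proof -
  have mono: "a \<le> b \<Longrightarrow> b < length w \<Longrightarrow> snd (w!a) \<Longrightarrow> snd (w!b)" for a b
  proof (induction b)
    case 0 then show ?case by simp
  next
    case (Suc b)
    show ?case
    proof (cases "a = Suc b")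
      case True then show ?thesis using Suc by simp
    next
      case False
      then have "snd (w!b)" using Suc by auto
      then show ?thesis using A Suc.prems by auto
    qed
  qed
  have "\<forall>k<length w. snd (w!k) = snd (w!0)"
  proof (intro allI impI)
    fix k assume k: "k < length w"
    show "snd (w!k) = snd (w!0)"
    proof (cases "snd (w!0)")
      case True then show ?thesis using mono[of 0 k] k by auto
    next
      case False
      show ?thesis
      proof (rule ccontr)
        assume "snd (w!k) \<noteq> snd (w!0)"
        then have "snd (w!k)" using False by auto
        then have l: "snd (w!(length w - 1))" using mono[of k "length w - 1"] k by auto
        have "k \<noteq> 0"
        proof
          assume "k = 0" then show False using `snd (w!k)` False by simp
        qed
        then have "length w \<ge> 2" using k by auto
        then show False using B False l by auto
      qed
    qed
  qed
  then show ?thesis by (metis in_set_conv_nth)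
qed

lemma two_sec: "length (secw d [(i,True),(j,False)] y) = 2 \<Longrightarrow> \<exists>z. secw d [(i,True),(j,False)] y = [(z,True),(z,False)]"
  by (auto simp: stp_def split: if_splits)

lemma full_TF:
  assumes f: "length (secw d w x) = length w" and w: "w = p @ [(i,True),(j,False)] @ q"
  shows "\<exists>p' q' z. secw d w x = p' @ [(z,True),(z,False)] @ q'"
proof -
  have f1: "length (secw d ([(i,True),(j,False)] @ q) (endv d p x)) = length ([(i,True),(j,False)] @ q)"
    using full_append(2)[of d p "[(i,True),(j,False)] @ q" x] f w by auto
  have "length (secw d [(i,True),(j,False)] (endv d p x)) = 2"
    using full_append(1)[OF f1] by simp
  then obtain z where z: "secw d [(i,True),(j,False)] (endv d p x) = [(z,True),(z,False)]"
    using two_sec by blast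
  have "secw d w x = secw d p x @ secw d [(i,True),(j,False)] (endv d p x) @ secw d q (endv d [(i,True),(j,False)] (endv d p x))"
    by (simp only: w secw_append)
  then have "secw d w x = secw d p x @ [(z,True),(z,False)] @ secw d q (endv d [(i,True),(j,False)] (endv d p x))"
    using z by simp
  then show ?thesis by blast
qed

lemma one_F: "length (secw d [(j,False)] x) = 1 \<Longrightarrow> secw d [(j,False)] x = [(x,False)]"
  by (auto simp: stp_def split: if_splits)
lemma one_T: "length (secw d [(i,True)] y) = 1 \<Longrightarrow> secw d [(i,True)] y = [(endv d [(i,True)] y,True)]"
  by (auto simp: stp_def split: if_splits)

lemma full_cyc:
  assumes f: "length (secw d w x) = length w" and w: "w = (j,False) # m @ [(i,True)]"
    and e: "endv d w x = x"
  shows "\<exists>m'. secw d w x = (x,False) # m' @ [(x,True)]"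
proof -
  have w': "w = [(j,False)] @ (m @ [(i,True)])" using w by simp
  have f1: "length (secw d [(j,False)] x) = 1" using full_append(1)[of d "[(j,False)]" "m @ [(i,True)]" x] f w' by simp
  let ?y = "endv d [(j,False)] x"
  have f2: "length (secw d (m @ [(i,True)]) ?y) = length (m @ [(i,True)])"
    using full_append(2)[of d "[(j,False)]" "m @ [(i,True)]" x] f w' by simp
  have f3: "length (secw d [(i,True)] (endv d m ?y)) = 1" using full_append(2)[OF f2] by simp
  have ee: "endv d [(i,True)] (endv d m ?y) = x" using e w' by (simp add: endv_append)
  have "secw d w x = [(x,False)] @ secw d m ?y @ [(x,True)]"
    using w' one_F[OF f1] one_T[OF f3] ee by (simp add: secw_append)
  then show ?thesis by auto
qed



lemma t1: "nxt d j \<noteq> j \<Longrightarrow> secw d ((j,False)#(j,False)#r) j = (j,False)#(nxt d j,False)#secw d r j"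
  by (simp add: stp_def)
lemma t2: "nxt d j \<noteq> j \<Longrightarrow> secw d ((j,True)#(j,True)#r) j = (nxt d j,True)#(j,True)#secw d r j"
  by (simp add: stp_def)


lemma exp_out: "is_word d w \<Longrightarrow> k \<notin> {1..d} \<Longrightarrow> exp_sum w k = 0"
proof -
  assume w: "is_word d w" and k: "k \<notin> {1..d}"
  have "filter (\<lambda>l. l = (k, False)) w = []" "filter (\<lambda>l. l = (k, True)) w = []"
    using w k by (auto simp: filter_empty_conv is_word_def)
  then show ?thesis by (simp add: exp_sum_def)
qed

lemma main:
  assumes d: "d \<ge> 3" and od: "odd d"
  shows "length w = L \<Longrightarrow> is_word d w \<Longrightarrow> represents_identity d w \<Longrightarrow> \<forall>k. exp_sum w k = 0"
proof (induction L arbitrary: w rule: less_induct)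
  case (less L)
  have w: "is_word d w" and id: "represents_identity d w" using less.prems by auto
  have IH: "\<forall>w'. length w' < length w \<longrightarrow> is_word d w' \<longrightarrow> represents_identity d w' \<longrightarrow> (\<forall>k. exp_sum w' k = 0)"
    using less.IH less.prems(1) by auto
  have d2: "d \<ge> 2" using d by simp
  have secz: "\<forall>k. exp_sum (secw d w x) k = 0" if x: "x \<in> {1..d}" for x
  proof -
    let ?s = "secw d w x"
    have sw: "is_word d ?s" using secw_is_word[OF w x] .
    have sid: "represents_identity d ?s" using closed(2)[OF id x] .
    have cl: "endv d w x = x" using closed(1)[OF id x] .
    show ?thesis
    proof (cases "length ?s < length w")
      case True then show ?thesis using IH sw sid by auto
    next
      case False
      then have f: "length ?s = length w" using secw_len[of d w x] by auto
      show ?thesis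
      proof (cases "w = []")
        case True then show ?thesis by (simp add: exp_sum_def)
      next
        case wne: False
        show ?thesis
        proof (cases "\<exists>k. Suc k < length w \<and> snd (w!k) \<and> \<not> snd (w!Suc k)")
          case True
          then obtain k where k: "Suc k < length w" "snd (w!k)" "\<not> snd (w!Suc k)" by blast
          obtain i where wi: "w!k = (i,True)" using k(2) by (cases "w!k") auto
          obtain j where wj: "w!Suc k = (j,False)" using k(3) by (cases "w!Suc k") auto
          have "w = take k w @ w!k # drop (Suc k) w" using k(1) id_take_nth_drop[of k w] by simp
          moreover have "drop (Suc k) w = w!Suc k # drop (Suc (Suc k)) w"
            using k(1) Cons_nth_drop_Suc[of "Suc k" w] by simp
          ultimately have "w = take k w @ [(i,True),(j,False)] @ drop (Suc (Suc k)) w"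
            using wi wj by simp
          then obtain p' q' z where sp: "?s = p' @ [(z,True),(z,False)] @ q'"
            using full_TF[OF f] by blast
          note r = R1[OF d2 sp sid sw]
          have "\<forall>k. exp_sum (p' @ q') k = 0" using IH r(1,2,4) f by auto
          then show ?thesis using r(3) by auto
        next
          case nA: False
          show ?thesis
          proof (cases "length w \<ge> 2 \<and> \<not> snd (w!0) \<and> snd (w!(length w - 1))")
            case True
            obtain j where wj: "w!0 = (j,False)" using True by (cases "w!0") auto
            obtain i where wi: "w!(length w - 1) = (i,True)" using True by (cases "w!(length w - 1)") auto
            have bl: "butlast w \<noteq> []" using True by (cases w) auto
            have "w = butlast w @ [last w]" using wne by simp
            moreover have "last w = (i,True)" using wi wne by (simp add: last_conv_nth)
            moreover have "butlast w = hd (butlast w) # tl (butlast w)" using bl by simp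
            moreover have "hd (butlast w) = (j,False)"
              using bl wj True by (simp add: hd_conv_nth nth_butlast)
            ultimately have "w = (j,False) # tl (butlast w) @ [(i,True)]" by (metis append_Cons)
            then obtain m' where sm: "?s = (x,False) # m' @ [(x,True)]"
              using full_cyc[OF f _ cl] by blast
            note r = R2[OF d2 sm sid sw]
            have "\<forall>k. exp_sum m' k = 0" using IH r(1,2,4) f by auto
            then show ?thesis using r(3) by auto
          next
            case nB: False
            have u: "\<forall>l\<in>set w. snd l = snd (w!0)" using signs[OF nA nB wne] .
            obtain j b where w0: "w!0 = (j,b)" by fastforce
            have wc: "w = (j,b) # tl w" using wne w0 by (cases w) auto
            have u': "\<forall>l\<in>set w. snd l = b" using u w0 by simp
            have allj: "\<forall>l\<in>set w. fst l = j" using unif[OF d IH w id u' wc] .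
            have "(j,b) \<in> set w" using w0 wne by (metis nth_mem length_greater_0_conv)
            then have j: "j \<in> {1..d}" using w by (auto simp: is_word_def)
            have ne: "nxt d j \<noteq> j" using nxt_neq d2 by auto
            have "tl w \<noteq> []"
            proof
              assume "tl w = []"
              then have "w = [(j,b)]" using wc by simp
              then have "endv d w j = nxt d j" by (cases b) (auto simp: stp_def)
              then show False using closed(1)[OF id j] ne by simp
            qed
            then obtain a r where ar: "tl w = a # r" by (cases "tl w") auto
            have ww0: "w = (j,b) # a # r" using wc unfolding ar .
            have "a \<in> set w" using ww0 by simp
            then have "fst a = j" "snd a = b" using allj u' by auto
            then have "a = (j,b)" by (simp add: prod_eq_iff)
            then have ww: "w = (j,b) # (j,b) # r" using ww0 by simp
            let ?t = "secw d w j"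
            have tw': "is_word d ?t" using secw_is_word[OF w j] .
            have tid: "represents_identity d ?t" using closed(2)[OF id j] .
            have tu: "\<forall>l\<in>set ?t. snd l = b" using sec_unif[OF u'] .
            have act: "snd (stp d (j,b) j) \<noteq> None" using act_iff[of d "(j,b)" j] by simp
            have tne: "?t \<noteq> []" unfolding ww using act by (cases "snd (stp d (j,b) j)") simp_all
            have tf: "length ?t = length w" using must_full[OF d IH w id u' j tne] .
            have IHt: "\<forall>w'. length w' < length ?t \<longrightarrow> is_word d w' \<longrightarrow> represents_identity d w' \<longrightarrow> (\<forall>k. exp_sum w' k = 0)"
              using IH tf by simp
            show ?thesis
            proof (cases b)
              case False
              have "w = (j,False)#(j,False)#r" using ww False by simp
              then have "?t = (j,False) # (nxt d j, False) # secw d r j"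
                using t1[OF ne] by simp
              moreover have "b = False" using False by simp
              ultimately have eq: "?t = (j,b) # (nxt d j, b) # secw d r j" by simp
              have al: "\<forall>l\<in>set ?t. fst l = j" using unif[OF d IHt tw' tid tu eq] .
              have "(nxt d j, b) \<in> set ?t" unfolding eq by simp
              from bspec[OF al this] have "nxt d j = j" by simp
              then show ?thesis using ne by blast
            next
              case True
              have "w = (j,True)#(j,True)#r" using ww True by simp
              then have "?t = (nxt d j, True) # (j, True) # secw d r j"
                using t2[OF ne] by simp
              moreover have "b = True" using True by simp
              ultimately have eq: "?t = (nxt d j,b) # (j, b) # secw d r j" by simp
              have al: "\<forall>l\<in>set ?t. fst l = nxt d j" using unif[OF d IHt tw' tid tu eq] .
              have "(j, b) \<in> set ?t" unfolding eq by simp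
              from bspec[OF al this] have "fst (j,b) = nxt d j" .
              then have "nxt d j = j" by (metis fst_conv)
              then show ?thesis using ne by blast
            qed
          qed
        qed
      qed
    qed
  qed
  have "\<forall>k\<in>{1..d}. exp_sum w k + exp_sum w (prv d k) = 0"
  proof
    fix k assume k: "k \<in> {1..d}"
    have "exp_sum w k + exp_sum w (prv d k) = (\<Sum>x\<in>{1..d}. exp_sum (secw d w x) k)"
      using sum_sec[OF d2 w k] by simp
    also have "\<dots> = 0" using secz by simp
    finally show "exp_sum w k + exp_sum w (prv d k) = 0" .
  qed
  moreover have "d \<ge> 1" using d by simp
  ultimately have "\<forall>k\<in>{1..d}. exp_sum w k = 0" using M_inj[OF od, of "exp_sum w"] by blast
  then show ?case using exp_out[OF w] by blast
qed

theorem theorem4p1: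
  fixes d :: nat and w :: "(nat \<times> bool) list"
  assumes "d \<ge> 3" and "odd d"
    and "is_word d w"
    and "represents_identity d w"
  shows "\<forall>i \<in> {1..d}. exp_sum w i = 0"
  using main[OF assms(1,2) refl assms(3,4)] by blast

end
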